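(* Let $G\in\mathcal{RG}^{{\underline{\kappa}},*}_{g,n}$ be non-bipartite and $\underline b\in\mathbb R^n$. A point $w\in\operatorname{vp}_G^{-1}(\underline b)$ is a vertex of $P_G(\underline b)$ if and only if $w(e)\ge0$ for all $e\in E(G)\setminus S(G)$ and the edge set $F=\{e\in E(G)\setminus S(G):w(e)>0\}$ forms a disjoint union of trees and/or one-odd-cycle graphs. Moreover, the cone of feasible directions of $P_G(\underline b)$ at such a vertex is $\{v\in\operatorname{vp}_G^{-1}(0):v(e)\ge0\ \forall e\in E(G)\setminus(S(G)\cup F)\}$; in particular it depends only on $F$ and not on $\underline b$.
   Context: $\mathcal{RG}^{{\underline{\kappa}},*}_{g,n}$: connected ribbon graphs of genus $g$ with $n$ labeled vertices and faces of odd degrees ${\underline{\kappa}}$. $\operatorname{vp}_G:\mathbb R^{E(G)}\to\mathbb R^n$, $\operatorname{vp}_G(w)_v=\sum_e a_{ve}w(e)$ ($a_{ve}=2$ for a loop at $v$, $1$ for other incident edges, $0$ otherwise). Static edges $S(G)$: edges $e$ such that some component of $G-e$ is bipartite. $P_G(\underline b)=\{w\in\operatorname{vp}_G^{-1}(\underline b):w(e)\ge0\ \forall e\in E(G)\setminus S(G)\}$. A one-odd-cycle graph is a connected graph with exactly one simple cycle, of odd length. The cone of feasible directions of a polyhedron $P$ at $p$ is $\{v: p+\varepsilon v\in P\text{ for some }\varepsilon>0\}$. *)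

theory Defs
  imports Complex_Main "HOL-Library.Multiset"
begin

text \<open>Ribbon graphs are encoded by a finite set H of half-edges, a vertex rotation
  s0 (a permutation of H whose cycles are the vertices), an edge involution s1
  (fixed-point free involution of H whose orbits are the edges) and a vertex
  labelling vl : H -> {0..<n} (vertex i of the paper is label i-1).
  Real vectors indexed by E(G) are functions on 'h set vanishing off E(G);
  vectors in R^n are functions nat => real of which only arguments < n matter.\<close>

definition orbit :: "('h \<Rightarrow> 'h) \<Rightarrow> 'h \<Rightarrow> 'h set" where
  "orbit f h = {(f ^^ k) h | k. True}"

definition edges :: "'h set \<Rightarrow> ('h \<Rightarrow> 'h) \<Rightarrow> 'h set set" where
  "edges H s1 = {{h, s1 h} | h. h \<in> H}"

definition faces :: "'h set \<Rightarrow> ('h \<Rightarrow> 'h) \<Rightarrow> ('h \<Rightarrow> 'h) \<Rightarrow> 'h set set" where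
  "faces H s0 s1 = {orbit (s0 \<circ> s1) h | h. h \<in> H}"

definition joins :: "('h \<Rightarrow> nat) \<Rightarrow> 'h set \<Rightarrow> nat \<Rightarrow> nat \<Rightarrow> bool" where
  "joins vl e u v \<longleftrightarrow> (\<exists>h h'. e = {h, h'} \<and> h \<noteq> h' \<and> vl h = u \<and> vl h' = v)"

definition adj :: "('h \<Rightarrow> nat) \<Rightarrow> 'h set set \<Rightarrow> nat \<Rightarrow> nat \<Rightarrow> bool" where
  "adj vl F u v \<longleftrightarrow> (\<exists>e\<in>F. joins vl e u v)"

definition comp :: "('h \<Rightarrow> nat) \<Rightarrow> 'h set set \<Rightarrow> nat \<Rightarrow> nat set" where
  "comp vl F v = {u. (adj vl F)\<^sup>*\<^sup>* v u}"

definition edges_in :: "('h \<Rightarrow> nat) \<Rightarrow> 'h set set \<Rightarrow> nat set \<Rightarrow> 'h set set" where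
  "edges_in vl F K = {e \<in> F. \<exists>h\<in>e. vl h \<in> K}"

definition bipartite_on :: "('h \<Rightarrow> nat) \<Rightarrow> 'h set set \<Rightarrow> nat set \<Rightarrow> bool" where
  "bipartite_on vl F K \<longleftrightarrow>
     (\<exists>c :: nat \<Rightarrow> bool. \<forall>e\<in>edges_in vl F K. \<forall>u v. joins vl e u v \<longrightarrow> c u \<noteq> c v)"

definition connected_graph :: "nat \<Rightarrow> ('h \<Rightarrow> nat) \<Rightarrow> 'h set set \<Rightarrow> bool" where
  "connected_graph n vl F \<longleftrightarrow> (\<forall>u<n. \<forall>v<n. (adj vl F)\<^sup>*\<^sup>* u v)"

definition is_ribbon_graph ::
  "nat \<Rightarrow> nat \<Rightarrow> nat list \<Rightarrow> 'h set \<Rightarrow> ('h \<Rightarrow> 'h) \<Rightarrow> ('h \<Rightarrow> 'h) \<Rightarrow> ('h \<Rightarrow> nat) \<Rightarrow> bool" where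
  "is_ribbon_graph g n \<kappa> H s0 s1 vl \<longleftrightarrow>
     finite H \<and> bij_betw s0 H H \<and> bij_betw s1 H H
   \<and> (\<forall>h\<in>H. s1 h \<noteq> h \<and> s1 (s1 h) = h)
   \<and> vl ` H = {0..<n}
   \<and> (\<forall>h\<in>H. \<forall>h'\<in>H. vl h = vl h' \<longleftrightarrow> h' \<in> orbit s0 h)
   \<and> image_mset card (mset_set (faces H s0 s1)) = mset \<kappa>
   \<and> (\<forall>k\<in>set \<kappa>. odd k)
   \<and> int n - int (card (edges H s1)) + int (length \<kappa>) = 2 - 2 * int g
   \<and> connected_graph n vl (edges H s1)"

definition bipartite :: "nat \<Rightarrow> ('h \<Rightarrow> nat) \<Rightarrow> 'h set set \<Rightarrow> bool" where
  "bipartite n vl F \<longleftrightarrow> bipartite_on vl F {0..<n}"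

definition static_edges :: "nat \<Rightarrow> ('h \<Rightarrow> nat) \<Rightarrow> 'h set set \<Rightarrow> 'h set set" where
  "static_edges n vl E = {e \<in> E. \<exists>v<n. bipartite_on vl (E - {e}) (comp vl (E - {e}) v)}"

text \<open>a_{ve}: number of half-edges of e at v (2 for a loop at v)\<close>
definition vp :: "('h \<Rightarrow> nat) \<Rightarrow> 'h set set \<Rightarrow> ('h set \<Rightarrow> real) \<Rightarrow> nat \<Rightarrow> real" where
  "vp vl E w v = (\<Sum>e\<in>E. real (card {h\<in>e. vl h = v}) * w e)"

definition edge_space :: "'h set set \<Rightarrow> ('h set \<Rightarrow> real) set" where
  "edge_space E = {w. \<forall>e. e \<notin> E \<longrightarrow> w e = 0}"

definition vp_preimage :: "nat \<Rightarrow> ('h \<Rightarrow> nat) \<Rightarrow> 'h set set \<Rightarrow> (nat \<Rightarrow> real) \<Rightarrow> ('h set \<Rightarrow> real) set" where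
  "vp_preimage n vl E b = {w \<in> edge_space E. \<forall>v<n. vp vl E w v = b v}"

definition P_G :: "nat \<Rightarrow> ('h \<Rightarrow> nat) \<Rightarrow> 'h set set \<Rightarrow> (nat \<Rightarrow> real) \<Rightarrow> ('h set \<Rightarrow> real) set" where
  "P_G n vl E b = {w \<in> vp_preimage n vl E b. \<forall>e \<in> E - static_edges n vl E. w e \<ge> 0}"

definition is_vertex :: "('e \<Rightarrow> real) set \<Rightarrow> ('e \<Rightarrow> real) \<Rightarrow> bool" where
  "is_vertex P w \<longleftrightarrow> w \<in> P \<and>
     (\<forall>u\<in>P. \<forall>v\<in>P. \<forall>t::real. 0 < t \<and> t < 1 \<and> w = (\<lambda>e. t * u e + (1 - t) * v e) \<longrightarrow> u = v)"

definition feasible_cone :: "('e \<Rightarrow> real) set \<Rightarrow> ('e \<Rightarrow> real) \<Rightarrow> ('e \<Rightarrow> real) set" where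
  "feasible_cone P p = {v. \<exists>\<epsilon>>0. (\<lambda>e. p e + \<epsilon> * v e) \<in> P}"

definition is_cycle :: "('h \<Rightarrow> nat) \<Rightarrow> 'h set set \<Rightarrow> 'h set set \<Rightarrow> bool" where
  "is_cycle vl F C \<longleftrightarrow> (\<exists>es vs. length es = length vs \<and> length es \<ge> 1 \<and>
      distinct es \<and> distinct vs \<and> set es = C \<and> C \<subseteq> F \<and>
      (\<forall>i<length es. joins vl (es ! i) (vs ! i) (vs ! ((i + 1) mod length es))))"

definition is_tree :: "('h \<Rightarrow> nat) \<Rightarrow> 'h set set \<Rightarrow> bool" where
  "is_tree vl F \<longleftrightarrow> \<not> (\<exists>C. is_cycle vl F C)"

definition is_one_odd_cycle :: "('h \<Rightarrow> nat) \<Rightarrow> 'h set set \<Rightarrow> bool" where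
  "is_one_odd_cycle vl F \<longleftrightarrow> (\<exists>C. is_cycle vl F C \<and> odd (card C) \<and> (\<forall>C'. is_cycle vl F C' \<longrightarrow> C' = C))"

text \<open>every connected component of ({0..<n}, F) is a tree or a one-odd-cycle graph
  (isolated vertices count as trivial trees); components are connected by construction\<close>
definition trees_and_ooc :: "nat \<Rightarrow> ('h \<Rightarrow> nat) \<Rightarrow> 'h set set \<Rightarrow> bool" where
  "trees_and_ooc n vl F \<longleftrightarrow>
     (\<forall>v<n. is_tree vl (edges_in vl F (comp vl F v)) \<or>
            is_one_odd_cycle vl (edges_in vl F (comp vl F v)))"

end

theory Submission
  imports Defs
begin

definition has_end :: "('h \<Rightarrow> nat) \<Rightarrow> 'h set \<Rightarrow> nat \<Rightarrow> bool" where
  "has_end vl f x \<longleftrightarrow> (\<exists>h\<in>f. vl h = x)"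

definition good :: "'h set \<Rightarrow> bool" where
  "good f \<longleftrightarrow> (\<exists>h h'. f = {h, h'} \<and> h \<noteq> h')"

lemma joins_sym: "joins vl e a b \<Longrightarrow> joins vl e b a"
  unfolding joins_def by (metis insert_commute)

lemma joins_end: "joins vl e a b \<Longrightarrow> has_end vl e x \<longleftrightarrow> (x = a \<or> x = b)"
  unfolding joins_def has_end_def by auto

lemma joins_good: "joins vl e a b \<Longrightarrow> good e"
  unfolding joins_def good_def by auto

lemma good_joins: "good f \<Longrightarrow> has_end vl f x \<Longrightarrow> \<exists>y. joins vl f x y"
proof -
  assume "good f" "has_end vl f x"
  then obtain h h' where f: "f = {h,h'}" "h \<noteq> h'" unfolding good_def by blast
  with \<open>has_end vl f x\<close> have "vl h = x \<or> vl h' = x" unfolding has_end_def by auto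
  then show ?thesis
  proof
    assume "vl h = x" then show ?thesis unfolding joins_def using f by blast
  next
    assume "vl h' = x" then have "joins vl f x (vl h)" unfolding joins_def using f
      by (metis insert_commute)
    then show ?thesis by blast
  qed
qed

lemma cnt_pair: "h \<noteq> h' \<Longrightarrow> card {k\<in>{h,h'}. vl k = x} =
   (if vl h = x then 1 else 0) + (if vl h' = x then 1 else 0)"
proof -
  assume hh: "h \<noteq> h'"
  have "{k\<in>{h,h'}. vl k = x} = (if vl h = x then {h} else {}) \<union> (if vl h' = x then {h'} else {})"
    by auto
  then show ?thesis using hh by (simp add: card_Un_disjoint)
qed

lemma cnt_joins: "joins vl e a b \<Longrightarrow> card {k\<in>e. vl k = x} =
   (if a = x then 1 else 0) + (if b = x then 1 else 0)"
proof -
  assume "joins vl e a b"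
  then obtain h h' where "e = {h,h'}" "h \<noteq> h'" "vl h = a" "vl h' = b" unfolding joins_def by blast
  then show ?thesis using cnt_pair[of h h' vl x] by simp
qed

lemma cnt_pos: "good f \<Longrightarrow> has_end vl f x \<Longrightarrow> card {k\<in>f. vl k = x} \<ge> 1"
  using good_joins[of f vl x] cnt_joins by fastforce

lemma cnt_zero: "\<not> has_end vl f x \<Longrightarrow> card {k\<in>f. vl k = x} = 0"
proof -
  assume "\<not> has_end vl f x"
  then have "{k\<in>f. vl k = x} = {}" unfolding has_end_def by auto
  then show ?thesis by (metis card.empty)
qed

lemma is_cycle_mono: "is_cycle vl D C \<Longrightarrow> D \<subseteq> D' \<Longrightarrow> is_cycle vl D' C"
  unfolding is_cycle_def by blast

lemma vp_lin: "finite E \<Longrightarrow> vp vl E (\<lambda>e. a e + c * d e) x = vp vl E a x + c * vp vl E d x"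
  unfolding vp_def by (simp add: sum.distrib sum_distrib_left algebra_simps)

lemma vp_diff: "vp vl E (\<lambda>e. a e - d e) x = vp vl E a x - vp vl E d x"
  unfolding vp_def by (simp add: sum_subtractf algebra_simps)

fun wvalid :: "('h \<Rightarrow> nat) \<Rightarrow> nat \<Rightarrow> ('h set \<times> nat) list \<Rightarrow> bool" where
  "wvalid vl a [] = True"
| "wvalid vl a ((e,x)#r) = (joins vl e a x \<and> wvalid vl x r)"

fun wend :: "nat \<Rightarrow> ('h set \<times> nat) list \<Rightarrow> nat" where
  "wend a [] = a"
| "wend a ((e,x)#r) = wend x r"

fun ivec :: "('h set \<times> nat) list \<Rightarrow> 'h set \<Rightarrow> int" where
  "ivec [] f = 0"
| "ivec ((e,x)#r) f = (if e = f then 1 else 0) - ivec r f"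

fun wrev :: "nat \<Rightarrow> ('h set \<times> nat) list \<Rightarrow> ('h set \<times> nat) list" where
  "wrev a [] = []"
| "wrev a ((e,x)#r) = wrev x r @ [(e,a)]"

definition occ :: "('h set \<times> nat) list \<Rightarrow> 'h set \<Rightarrow> nat" where
  "occ r f = length (filter (\<lambda>s. fst s = f) r)"

lemma wvalid_append: "wvalid vl a (r1 @ r2) \<longleftrightarrow> wvalid vl a r1 \<and> wvalid vl (wend a r1) r2"
  by (induction r1 arbitrary: a) auto

lemma wend_append: "wend a (r1 @ r2) = wend (wend a r1) r2"
  by (induction r1 arbitrary: a) auto

lemma wrev_props: "wvalid vl a r \<Longrightarrow> wvalid vl (wend a r) (wrev a r) \<and> wend (wend a r) (wrev a r) = a"
  by (induction r arbitrary: a) (auto simp: wvalid_append wend_append joins_sym)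

lemma wrev_length: "length (wrev a r) = length r"
  by (induction r arbitrary: a) auto

lemma wrev_set: "fst ` set (wrev a r) = fst ` set r"
  by (induction a r rule: wrev.induct) (simp_all add: Un_commute)

lemma wrev_occ: "occ (wrev a r) f = occ r f"
proof (induction r arbitrary: a)
  case Nil then show ?case by simp
next
  case (Cons s r)
  obtain e y where s: "s = (e,y)" by fastforce
  have "occ (wrev a (s#r)) f = occ (wrev y r) f + occ [(e,a)] f"
    by (simp add: s occ_def del: filter.simps)
  also have "\<dots> = occ r f + occ [(e,y)] f" using Cons.IH by (simp add: occ_def)
  also have "\<dots> = occ (s#r) f" by (simp add: s occ_def)
  finally show ?case .
qed

lemma occ_append: "occ (r1 @ r2) f = occ r1 f + occ r2 f"
  unfolding occ_def by simp

lemma ivec_parity: "even (ivec r f) \<longleftrightarrow> even (occ r f)"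
proof (induction r)
  case Nil then show ?case by (simp add: occ_def)
next
  case (Cons s r)
  obtain e y where s: "s = (e,y)" by fastforce
  show ?case
  proof (cases "e = f")
    case True
    then have "ivec (s#r) f = 1 - ivec r f" "occ (s#r) f = Suc (occ r f)" by (simp_all add: s occ_def)
    then show ?thesis using Cons.IH by simp
  next
    case False
    then have "ivec (s#r) f = - ivec r f" "occ (s#r) f = occ r f" by (simp_all add: s occ_def)
    then show ?thesis using Cons.IH by simp
  qed
qed

lemma ivec_zero: "f \<notin> fst ` set r \<Longrightarrow> ivec r f = 0"
proof (induction r f rule: ivec.induct)
  case (1 f) then show ?case by simp
next
  case (2 e x r f)
  then have "e \<noteq> f" by force
  then show ?case using 2 by simp
qed

lemma vp_walk:
  assumes "finite E" "fst ` set r \<subseteq> E" "wvalid vl a r"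
  shows "vp vl E (\<lambda>f. real_of_int (ivec r f)) x =
     (if a = x then 1 else 0) - (-1) ^ length r * (if wend a r = x then 1 else 0)"
  using assms(2,3)
proof (induction r arbitrary: a)
  case Nil
  then show ?case by (simp add: vp_def)
next
  case (Cons s r)
  obtain e y where s: "s = (e,y)" by fastforce
  have eE: "e \<in> E" using Cons.prems s by auto
  have j: "joins vl e a y" and v: "wvalid vl y r" using Cons.prems s by auto
  have IH: "vp vl E (\<lambda>f. real_of_int (ivec r f)) x =
     (if y = x then 1 else 0) - (-1) ^ length r * (if wend y r = x then 1 else 0)"
    using Cons.IH[OF _ v] Cons.prems by auto
  have "(\<lambda>f. real_of_int (ivec (s#r) f)) = (\<lambda>f. (if e = f then 1 else 0) - real_of_int (ivec r f))"
    by (rule ext) (simp add: s)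
  then have "vp vl E (\<lambda>f. real_of_int (ivec (s#r) f)) x =
        vp vl E (\<lambda>f. (if e = f then 1 else 0) - real_of_int (ivec r f)) x"
    by simp
  also have "\<dots> = vp vl E (\<lambda>f. if e = f then 1 else 0) x - vp vl E (\<lambda>f. real_of_int (ivec r f)) x"
    by (rule vp_diff)
  also have "vp vl E (\<lambda>f. if e = f then 1 else 0) x = real (card {k\<in>e. vl k = x})"
    unfolding vp_def using eE assms(1) by (simp add: if_distrib cong: if_cong)
  also have "real (card {k\<in>e. vl k = x}) = (if a = x then 1 else 0) + (if y = x then 1 else 0)"
    using cnt_joins[OF j] by simp
  finally show ?case using IH s by simp
qed

lemma chain_walk:
  assumes "\<And>i. i < m \<Longrightarrow> joins vl (Ed i) (X i) (X (Suc i))"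
  shows "j \<le> m \<Longrightarrow> wvalid vl (X j) (map (\<lambda>i. (Ed i, X (Suc i))) [j..<m]) \<and>
          wend (X j) (map (\<lambda>i. (Ed i, X (Suc i))) [j..<m]) = X m"
proof (induction "m - j" arbitrary: j)
  case 0
  then have "j = m" by simp
  then show ?case by simp
next
  case (Suc d)
  then have jm: "j < m" by simp
  have IH: "wvalid vl (X (Suc j)) (map (\<lambda>i. (Ed i, X (Suc i))) [Suc j..<m]) \<and>
          wend (X (Suc j)) (map (\<lambda>i. (Ed i, X (Suc i))) [Suc j..<m]) = X m"
    using Suc by simp
  show ?case using IH jm assms[OF jm] by (simp add: upt_conv_Cons)
qed

lemma cycle_walk:
  assumes "is_cycle vl D C"
  shows "\<exists>a r. wvalid vl a r \<and> wend a r = a \<and> length r = card C \<and> fst ` set r = C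
      \<and> (\<forall>f\<in>C. occ r f = 1) \<and> (\<exists>f\<in>C. has_end vl f a)"
proof -
  obtain es vs where L: "length es = length vs" "length es \<ge> 1" "distinct es" "distinct vs"
    "set es = C" "C \<subseteq> D" and J: "\<forall>i<length es. joins vl (es ! i) (vs ! i) (vs ! ((i + 1) mod length es))"
    using assms unfolding is_cycle_def by blast
  define k where "k = length es"
  define X where "X i = vs ! (i mod k)" for i
  have k1: "k \<ge> 1" using L k_def by simp
  have jj: "joins vl (es ! i) (X i) (X (Suc i))" if "i < k" for i
    using J that unfolding X_def k_def by simp
  define r where "r = map (\<lambda>i. (es ! i, X (Suc i))) [0..<k]"
  have cw: "wvalid vl (X 0) r \<and> wend (X 0) r = X k"
    using chain_walk[of k vl "\<lambda>i. es ! i" X 0, OF jj] unfolding r_def by simp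
  have X0: "X 0 = vs ! 0" "X k = vs ! 0" unfolding X_def using k1 by simp_all
  have "map fst r = map (\<lambda>i. es ! i) [0..<length es]" unfolding r_def k_def by simp
  then have mf: "map fst r = es" by (simp add: map_nth)
  have occ1: "occ r f = 1" if "f \<in> C" for f
  proof -
    have "occ r f = length (filter (\<lambda>e. e = f) (map fst r))"
      unfolding occ_def by (induction r) simp_all
    also have "\<dots> = card ({e. e = f} \<inter> set es)" using mf L(3) by (simp add: distinct_length_filter)
    also have "{e. e = f} \<inter> set es = {f}" using that L(5) by auto
    finally show ?thesis by simp
  qed
  have "fst ` set r = C" using mf L(5) by (metis set_map)
  moreover have "card C = length es" using L(3,5) distinct_card by metis
  then have "length r = card C" unfolding r_def k_def by simp
  moreover have lp: "0 < length es" using L(2) by linarith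
  moreover have j0: "joins vl (es ! 0) (vs ! 0) (vs ! ((0 + 1) mod length es))"
    using J lp by blast
  moreover have "has_end vl (es ! 0) (vs ! 0)" using joins_end[OF j0] by simp
  moreover have "es ! 0 \<in> C" using L(5) nth_mem[OF lp] by simp
  ultimately show ?thesis using cw X0 occ1 by metis
qed

lemma adj_sym: "adj vl F x y \<Longrightarrow> adj vl F y x"
  unfolding adj_def using joins_sym by blast

lemma rtr_sym: "(adj vl F)\<^sup>*\<^sup>* x y \<Longrightarrow> (adj vl F)\<^sup>*\<^sup>* y x"
proof (induction rule: rtranclp_induct)
  case base then show ?case by simp
next
  case (step y z)
  then show ?case using adj_sym converse_rtranclp_into_rtranclp by metis
qed

lemma rtr_walk: "(adj vl F)\<^sup>*\<^sup>* a b \<Longrightarrow> \<exists>r. wvalid vl a r \<and> wend a r = b \<and> fst ` set r \<subseteq> F"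
proof (induction rule: rtranclp_induct)
  case base
  then show ?case by (rule exI[of _ "[]"]) simp
next
  case (step y z)
  then obtain r where r: "wvalid vl a r" "wend a r = y" "fst ` set r \<subseteq> F" by blast
  from step obtain e where e: "e \<in> F" "joins vl e y z" unfolding adj_def by blast
  have "wvalid vl a (r @ [(e,z)]) \<and> wend a (r @ [(e,z)]) = z \<and> fst ` set (r @ [(e,z)]) \<subseteq> F"
    using r e by (simp add: wvalid_append wend_append)
  then show ?case by blast
qed

lemma comp_closed: "f \<in> F \<Longrightarrow> joins vl f a b \<Longrightarrow> a \<in> comp vl F v \<Longrightarrow> b \<in> comp vl F v"
  unfolding comp_def adj_def by (auto intro: rtranclp.rtrancl_into_rtrancl)

lemma comp_edge_ends:
  assumes "f \<in> F" "good f" "has_end vl f x" "x \<in> comp vl F v" "has_end vl f z"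
  shows "z \<in> comp vl F v"
proof -
  obtain y where j: "joins vl f x y" using good_joins assms by blast
  then have "y \<in> comp vl F v" using comp_closed assms by metis
  then show ?thesis using joins_end[OF j] assms by auto
qed

lemma edges_in_ends:
  assumes "f \<in> edges_in vl F (comp vl F v)" "good f" "has_end vl f z"
  shows "z \<in> comp vl F v"
proof -
  from assms(1) obtain h where "f \<in> F" "h \<in> f" "vl h \<in> comp vl F v" unfolding edges_in_def by blast
  then show ?thesis using comp_edge_ends assms unfolding has_end_def by blast
qed

lemma edges_in_I: "f \<in> F \<Longrightarrow> has_end vl f x \<Longrightarrow> x \<in> K \<Longrightarrow> f \<in> edges_in vl F K"
  unfolding edges_in_def has_end_def by auto

definition Vs :: "('h \<Rightarrow> nat) \<Rightarrow> 'h set set \<Rightarrow> nat set" where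
  "Vs vl D = {x. \<exists>f\<in>D. has_end vl f x}"

lemma good_finite: "good f \<Longrightarrow> finite f"
  unfolding good_def by auto

lemma Vs_finite: "finite D \<Longrightarrow> \<forall>f\<in>D. good f \<Longrightarrow> finite (Vs vl D)"
proof -
  assume "finite D" "\<forall>f\<in>D. good f"
  then have "finite (vl ` \<Union>D)" using good_finite by blast
  moreover have "Vs vl D \<subseteq> vl ` \<Union>D" unfolding Vs_def has_end_def by blast
  ultimately show ?thesis by (rule finite_subset[rotated])
qed

lemma good_has_end: "good f \<Longrightarrow> \<exists>x. has_end vl f x"
  unfolding good_def has_end_def by blast

lemma loop_cycle: "joins vl f x x \<Longrightarrow> f \<in> D \<Longrightarrow> is_cycle vl D {f}"
  unfolding is_cycle_def by (rule exI[of _ "[f]"], rule exI[of _ "[x]"]) simp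

definition pathp :: "('h \<Rightarrow> nat) \<Rightarrow> 'h set set \<Rightarrow> nat list \<Rightarrow> 'h set list \<Rightarrow> bool" where
  "pathp vl D vs es \<longleftrightarrow> length vs = Suc (length es) \<and> distinct vs \<and> set es \<subseteq> D \<and>
     (\<forall>i<length es. joins vl (es ! i) (vs ! i) (vs ! Suc i))"

lemma pathp_end: "pathp vl D vs es \<Longrightarrow> i < length es \<Longrightarrow>
    has_end vl (es ! i) x \<longleftrightarrow> (x = vs ! i \<or> x = vs ! Suc i)"
  unfolding pathp_def using joins_end by blast

lemma pathp_distinct: assumes "pathp vl D vs es" shows "distinct es"
proof -
  have L: "length vs = Suc (length es)" "distinct vs" using assms unfolding pathp_def by auto
  show ?thesis unfolding distinct_conv_nth
  proof (intro allI impI)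
    fix i l assume il: "i < length es" "l < length es" "i \<noteq> l"
    show "es ! i \<noteq> es ! l"
    proof
      assume eq: "es ! i = es ! l"
      have "has_end vl (es ! i) (vs ! i)" using pathp_end[OF assms il(1)] by simp
      then have "has_end vl (es ! l) (vs ! i)" using eq by simp
      then have "vs ! i = vs ! l \<or> vs ! i = vs ! Suc l" using pathp_end[OF assms il(2)] by simp
      moreover have "has_end vl (es ! l) (vs ! l)" using pathp_end[OF assms il(2)] by simp
      then have "has_end vl (es ! i) (vs ! l)" using eq by simp
      then have "vs ! l = vs ! i \<or> vs ! l = vs ! Suc i" using pathp_end[OF assms il(1)] by simp
      moreover have "i < length vs" "l < length vs" "Suc i < length vs" "Suc l < length vs"
        using il L(1) by simp_all
      ultimately show False
        using nth_eq_iff_index_eq[OF L(2), of i l] nth_eq_iff_index_eq[OF L(2), of i "Suc l"]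
          nth_eq_iff_index_eq[OF L(2), of l "Suc i"] il(3) by auto
    qed
  qed
qed

lemma cycle_exists:
  assumes fin: "finite D" and gd: "\<forall>f\<in>D. good f" and ne: "D \<noteq> {}"
    and AE: "\<forall>f\<in>D. \<forall>x. has_end vl f x \<longrightarrow> (\<exists>g\<in>D. g \<noteq> f \<and> has_end vl g x)"
  shows "\<exists>C. is_cycle vl D C"
proof (rule ccontr)
  assume nc: "\<not> ?thesis"
  define V where "V = Vs vl D"
  have finV: "finite V" unfolding V_def using Vs_finite fin gd by blast
  define P where "P k \<longleftrightarrow> (\<exists>vs es. pathp vl D vs es \<and> set vs \<subseteq> V \<and> length vs = k)" for k
  obtain f0 where f0: "f0 \<in> D" using ne by blast
  then obtain x0 where "has_end vl f0 x0" using good_has_end gd by blast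
  then have "x0 \<in> V" unfolding V_def Vs_def using f0 by blast
  then have P1: "P 1" unfolding P_def pathp_def
    by (intro exI[of _ "[x0]"] exI[of _ "[]"]) simp
  have bound: "\<forall>y. P y \<longrightarrow> id y < Suc (card V)"
  proof (intro allI impI)
    fix y assume "P y"
    then obtain vs es where "pathp vl D vs es" "set vs \<subseteq> V" "length vs = y" unfolding P_def by blast
    then have "y = card (set vs)" unfolding pathp_def using distinct_card by metis
    moreover have "card (set vs) \<le> card V" using \<open>set vs \<subseteq> V\<close> finV by (rule card_mono[rotated])
    ultimately show "id y < Suc (card V)" by simp
  qed
  obtain k where Pk: "P k" and kmax: "\<forall>y. P y \<longrightarrow> y \<le> k"
    using ex_has_greatest_nat[OF P1 bound] by auto
  then obtain vs es where pp: "pathp vl D vs es" and sV: "set vs \<subseteq> V" and lk: "length vs = k"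
    unfolding P_def by blast
  have L: "length vs = Suc (length es)" "distinct vs" "set es \<subseteq> D"
    and J: "\<forall>i<length es. joins vl (es ! i) (vs ! i) (vs ! Suc i)"
    using pp unfolding pathp_def by auto
  define v0 where "v0 = vs ! 0"
  have v0V: "v0 \<in> V" using sV L unfolding v0_def by auto
  obtain g where g: "g \<in> D" "has_end vl g v0" "es \<noteq> [] \<longrightarrow> g \<noteq> es ! 0"
  proof (cases "es = []")
    case True
    then show ?thesis using that v0V unfolding V_def Vs_def by blast
  next
    case False
    then have "es ! 0 \<in> D" using L by auto
    moreover have "has_end vl (es ! 0) v0" using pathp_end[OF pp] False unfolding v0_def by simp
    ultimately show ?thesis using that AE by blast
  qed
  obtain u where ju: "joins vl g v0 u" using good_joins gd g by blast
  have uV: "u \<in> V" unfolding V_def Vs_def using g(1) joins_end[OF ju] by blast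
  show False
  proof (cases "u = v0")
    case True
    then show False using loop_cycle[of vl g v0 D] ju g nc by blast
  next
    case uv0: False
    show False
    proof (cases "u \<in> set vs")
      case False
      have "pathp vl D (u # vs) (g # es)"
        unfolding pathp_def
      proof (intro conjI)
        show "\<forall>i<length (g # es). joins vl ((g # es) ! i) ((u # vs) ! i) ((u # vs) ! Suc i)"
        proof (intro allI impI)
          fix i assume "i < length (g # es)"
          then show "joins vl ((g # es) ! i) ((u # vs) ! i) ((u # vs) ! Suc i)"
            using J joins_sym[OF ju] L unfolding v0_def
            by (cases i) (auto simp: hd_conv_nth)
        qed
      qed (use L False g in simp_all)
      then have "P (Suc k)" unfolding P_def using sV uV lk
        by (intro exI[of _ "u # vs"] exI[of _ "g # es"]) simp
      then show False using kmax by fastforce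
    next
      case True
      then obtain j where j: "j < length vs" "vs ! j = u" by (auto simp: in_set_conv_nth)
      have j0: "j \<noteq> 0" using j uv0 unfolding v0_def by (cases j) auto
      have jes: "j \<le> length es" using j L by simp
      have esne: "es \<noteq> []" using jes j0 by auto
      define es' where "es' = take j es @ [g]"
      define vs' where "vs' = take (Suc j) vs"
      have les: "length es' = Suc j" unfolding es'_def using jes by simp
      have lvs: "length vs' = Suc j" unfolding vs'_def using j by simp
      have des: "distinct es"  using pathp_distinct[OF pp] .
      have gnot: "g \<notin> set (take j es)"
      proof
        assume "g \<in> set (take j es)"
        then obtain i where i: "i < j" "es ! i = g" using jes by (auto simp: in_set_conv_nth)
        show False
        proof (cases "i = 0")
          case True then show False using i g esne by simp
        next
          case False
          have "has_end vl (es ! i) v0" using i g by simp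
          moreover have "i < length es" using i jes by simp
          ultimately have "v0 = vs ! i \<or> v0 = vs ! Suc i" using pathp_end[OF pp, of i v0] by simp
          moreover have "i < length vs" "Suc i < length vs" "0 < length vs" using i j by linarith+
          ultimately show False
            using nth_eq_iff_index_eq[OF L(2), of 0 i] nth_eq_iff_index_eq[OF L(2), of 0 "Suc i"]
              False unfolding v0_def by auto
        qed
      qed
      have "is_cycle vl D (set es')"
        unfolding is_cycle_def
      proof (intro exI conjI)
        show "length es' = length vs'" using les lvs by simp
        show "1 \<le> length es'" using les by simp
        show "distinct es'" unfolding es'_def using des gnot by simp
        show "distinct vs'" unfolding vs'_def using L by simp
        show "set es' \<subseteq> D" unfolding es'_def using L g set_take_subset by fastforce
        show "\<forall>i<length es'. joins vl (es' ! i) (vs' ! i) (vs' ! ((i + 1) mod length es'))"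
        proof (intro allI impI)
          fix i assume i: "i < length es'"
          show "joins vl (es' ! i) (vs' ! i) (vs' ! ((i + 1) mod length es'))"
          proof (cases "i < j")
            case True
            have "es' ! i = es ! i" unfolding es'_def using True jes by (simp add: nth_append)
            moreover have "vs' ! i = vs ! i" unfolding vs'_def using True by simp
            moreover have "(i + 1) mod length es' = Suc i" using True les by simp
            moreover have "vs' ! Suc i = vs ! Suc i" unfolding vs'_def using True by simp
            ultimately show ?thesis using J True jes by simp
          next
            case False
            then have ij: "i = j" using i les by simp
            have "es' ! i = g" unfolding es'_def using ij jes by (simp add: nth_append)
            moreover have "vs' ! i = u" unfolding vs'_def using ij j by simp
            moreover have "(i + 1) mod length es' = 0" using ij les by simp
            moreover have "vs' ! 0 = v0" unfolding vs'_def v0_def by simp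
            ultimately show ?thesis using joins_sym[OF ju] by simp
          qed
        qed
      qed simp
      then show False using nc by blast
    qed
  qed
qed

lemma forest_bound:
  "finite D \<Longrightarrow> \<forall>f\<in>D. good f \<Longrightarrow> \<not> (\<exists>C. is_cycle vl D C) \<Longrightarrow> D \<noteq> {} \<Longrightarrow>
     card D < card (Vs vl D)"
proof (induction "card D" arbitrary: D rule: less_induct)
  case less
  have nAE: "\<not> (\<forall>f\<in>D. \<forall>x. has_end vl f x \<longrightarrow> (\<exists>g\<in>D. g \<noteq> f \<and> has_end vl g x))"
    using cycle_exists less.prems by blast
  then obtain f x where fx: "f \<in> D" "has_end vl f x" "\<forall>g\<in>D. g \<noteq> f \<longrightarrow> \<not> has_end vl g x"
    by blast
  obtain y where jy: "joins vl f x y" using good_joins less.prems fx by blast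
  have yx: "y \<noteq> x" using loop_cycle[of vl f x D] jy fx less.prems by blast
  define D' where "D' = D - {f}"
  have finVs: "finite (Vs vl D)" using Vs_finite less.prems by blast
  have xV: "x \<in> Vs vl D" "y \<in> Vs vl D" unfolding Vs_def using fx joins_end[OF jy] by auto
  have sub: "Vs vl D' \<subseteq> Vs vl D - {x}" unfolding Vs_def D'_def using fx by auto
  show ?case
  proof (cases "D' = {}")
    case True
    then have "D = {f}" unfolding D'_def using fx by auto
    moreover have "card {x, y} \<le> card (Vs vl D)" using xV finVs by (intro card_mono) auto
    ultimately show ?thesis using yx by simp
  next
    case False
    have cD: "card D' < card D" unfolding D'_def using fx(1) less.prems(1) card_Diff1_less by metis
    have "\<not> (\<exists>C. is_cycle vl D' C)" using less.prems is_cycle_mono unfolding D'_def by blast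
    then have "card D' < card (Vs vl D')"
      using less.hyps[OF cD] less.prems False unfolding D'_def by auto
    moreover have "card (Vs vl D') \<le> card (Vs vl D - {x})" using sub finVs by (intro card_mono) auto
    moreover have "card (Vs vl D - {x}) = card (Vs vl D) - 1" using xV finVs by simp
    moreover have "card D = Suc (card D')"
      using card_Suc_Diff1[OF less.prems(1) fx(1)] unfolding D'_def by simp
    ultimately show ?thesis by linarith
  qed
qed

definition deg :: "('h \<Rightarrow> nat) \<Rightarrow> 'h set set \<Rightarrow> nat \<Rightarrow> nat" where
  "deg vl D x = (\<Sum>f\<in>D. card {h\<in>f. vl h = x})"

lemma deg_sum:
  assumes "finite D" "\<forall>f\<in>D. good f"
  shows "(\<Sum>x\<in>Vs vl D. deg vl D x) = 2 * card D"
proof -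
  have finV: "finite (Vs vl D)" using Vs_finite assms by blast
  have "(\<Sum>x\<in>Vs vl D. deg vl D x) = (\<Sum>f\<in>D. \<Sum>x\<in>Vs vl D. card {h\<in>f. vl h = x})"
    unfolding deg_def by (rule sum.swap)
  also have "\<dots> = (\<Sum>f\<in>D. 2)"
  proof (rule sum.cong[OF refl])
    fix f assume fD: "f \<in> D"
    then obtain h h' where f: "f = {h,h'}" "h \<noteq> h'" using assms unfolding good_def by blast
    have inV: "vl h \<in> Vs vl D" "vl h' \<in> Vs vl D" unfolding Vs_def has_end_def using fD f(1) by blast+
    have "(\<Sum>x\<in>Vs vl D. card {k\<in>f. vl k = x}) =
          (\<Sum>x\<in>Vs vl D. (if vl h = x then 1 else 0) + (if vl h' = x then 1 else 0))"
      unfolding f(1) cnt_pair[OF f(2)] by (rule refl)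
    also have "\<dots> = 2" using inV finV by (simp add: sum.distrib)
    finally show "(\<Sum>x\<in>Vs vl D. card {k\<in>f. vl k = x}) = 2" .
  qed
  finally show ?thesis by simp
qed

lemma is_cycle_sub: "is_cycle vl X C \<Longrightarrow> C \<subseteq> X"
  unfolding is_cycle_def by blast

lemma Vs_mono: "A \<subseteq> B \<Longrightarrow> Vs vl A \<subseteq> Vs vl B"
  unfolding Vs_def by blast

lemma two_sum:
  fixes c :: "'a \<Rightarrow> nat" and d :: "'a \<Rightarrow> real"
  assumes fin: "finite D" and g: "g1 \<in> D" "g2 \<in> D" "g1 \<noteq> g2"
    and c1: "c g1 \<ge> 1" and c2: "c g2 \<ge> 1" and s2: "(\<Sum>g\<in>D. c g) = 2"
  shows "(\<Sum>g\<in>D. real (c g) * d g) = d g1 + d g2"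
proof -
  have sub: "{g1, g2} \<subseteq> D" using g by auto
  have "(\<Sum>g\<in>D. c g) = (\<Sum>g\<in>D - {g1,g2}. c g) + (\<Sum>g\<in>{g1,g2}. c g)"
    using sum.subset_diff[OF sub fin] .
  also have "(\<Sum>g\<in>{g1,g2}. c g) = c g1 + c g2" using g by simp
  finally have "(\<Sum>g\<in>D - {g1,g2}. c g) = 0" "c g1 = 1" "c g2 = 1" using s2 c1 c2 by linarith+
  then have z: "\<forall>g\<in>D - {g1,g2}. c g = 0" using fin by simp
  have "(\<Sum>g\<in>D. real (c g) * d g) = (\<Sum>g\<in>D - {g1,g2}. real (c g) * d g) + (\<Sum>g\<in>{g1,g2}. real (c g) * d g)"
    using sum.subset_diff[OF sub fin] .
  also have "(\<Sum>g\<in>D - {g1,g2}. real (c g) * d g) = 0" using z by simp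
  also have "(\<Sum>g\<in>{g1,g2}. real (c g) * d g) = d g1 + d g2" using g \<open>c g1 = 1\<close> \<open>c g2 = 1\<close> by simp
  finally show ?thesis by simp
qed

lemma kernel_zero:
  fixes d :: "'h set \<Rightarrow> real"
  assumes finE: "finite E" and gE: "\<forall>f\<in>E. good f" and FE: "F \<subseteq> E"
    and d0: "\<forall>f. f \<notin> F \<longrightarrow> d f = 0"
    and ker: "\<forall>x. vp vl E d x = 0"
    and TO: "\<forall>x\<in>Vs vl F. is_tree vl (edges_in vl F (comp vl F x)) \<or>
                          is_one_odd_cycle vl (edges_in vl F (comp vl F x))"
  shows "d f = 0"
proof (rule ccontr)
  assume nz: "d f \<noteq> 0"
  then have fF: "f \<in> F" using d0 by blast
  then have gf: "good f" using gE FE by blast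
  obtain x0 where fx0: "has_end vl f x0" using good_has_end[OF gf] by blast
  then have x0V: "x0 \<in> Vs vl F" unfolding Vs_def using fF by blast
  define K where "K = comp vl F x0"
  define Fc where "Fc = edges_in vl F K"
  define D where "D = {g\<in>Fc. d g \<noteq> 0}"
  have x0K: "x0 \<in> K" unfolding K_def comp_def by simp
  have FcF: "Fc \<subseteq> F" unfolding Fc_def edges_in_def by blast
  have DFc: "D \<subseteq> Fc" unfolding D_def by blast
  have DE: "D \<subseteq> E" using DFc FcF FE by blast
  have finD: "finite D" using DE finE finite_subset by blast
  have gD: "\<forall>g\<in>D. good g" using DE gE by blast
  have fD: "f \<in> D" unfolding D_def Fc_def using edges_in_I[OF fF fx0 x0K] nz by blast
  have endsK: "z \<in> K" if "g \<in> Fc" "has_end vl g z" for g z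
  proof -
    have "good g" using that(1) gE FcF FE by blast
    then show ?thesis using edges_in_ends[of g vl F x0 z] that unfolding Fc_def K_def by blast
  qed
  have vpD: "vp vl E d x = (\<Sum>g\<in>D. real (card {h\<in>g. vl h = x}) * d g)" if xK: "x \<in> K" for x
    unfolding vp_def
  proof (rule sum.mono_neutral_right[OF finE DE], rule ballI)
    fix g assume g: "g \<in> E - D"
    show "real (card {h\<in>g. vl h = x}) * d g = 0"
    proof (cases "d g = 0")
      case False
      then have "g \<in> F" using d0 by blast
      have "\<not> has_end vl g x"
      proof
        assume "has_end vl g x"
        then have "g \<in> Fc" unfolding Fc_def using edges_in_I[OF \<open>g \<in> F\<close> _ xK] by blast
        then show False using g False unfolding D_def by blast
      qed
      then have "card {h\<in>g. vl h = x} = 0" by (rule cnt_zero)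
      then show ?thesis by simp
    qed simp
  qed
  have AE: "\<forall>g\<in>D. \<forall>x. has_end vl g x \<longrightarrow> (\<exists>g'\<in>D. g' \<noteq> g \<and> has_end vl g' x)"
  proof (intro ballI allI impI, rule ccontr)
    fix g x assume gD': "g \<in> D" and gx: "has_end vl g x" and no: "\<not> (\<exists>g'\<in>D. g' \<noteq> g \<and> has_end vl g' x)"
    have xK: "x \<in> K" using endsK gD' gx DFc by blast
    have "(\<Sum>g'\<in>D. real (card {h\<in>g'. vl h = x}) * d g') =
          real (card {h\<in>g. vl h = x}) * d g + (\<Sum>g'\<in>D - {g}. real (card {h\<in>g'. vl h = x}) * d g')"
      using sum.remove[OF finD gD'] .
    also have "(\<Sum>g'\<in>D - {g}. real (card {h\<in>g'. vl h = x}) * d g') = 0"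
      using no cnt_zero by (intro sum.neutral) fastforce
    finally have "vp vl E d x = real (card {h\<in>g. vl h = x}) * d g" using vpD[OF xK] by simp
    moreover have "card {h\<in>g. vl h = x} \<ge> 1" using cnt_pos gD gD' gx by blast
    moreover have "d g \<noteq> 0" using gD' unfolding D_def by blast
    ultimately show False using ker by simp
  qed
  obtain C where cyc: "is_cycle vl D C" using cycle_exists[OF finD gD _ AE] fD by blast
  have cycFc: "is_cycle vl Fc C" using is_cycle_mono[OF cyc DFc] .
  have "\<not> is_tree vl Fc" unfolding is_tree_def using cycFc by blast
  then have "is_one_odd_cycle vl Fc" using TO x0V unfolding Fc_def K_def by blast
  then obtain C0 where C0: "is_cycle vl Fc C0" "odd (card C0)" "\<forall>C'. is_cycle vl Fc C' \<longrightarrow> C' = C0"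
    unfolding is_one_odd_cycle_def by blast
  have CC0: "C = C0" using C0 cycFc by blast
  obtain es vs where L: "length es = length vs" "length es \<ge> 1" "distinct es" "distinct vs"
    "set es = C" "C \<subseteq> D" and J: "\<forall>i<length es. joins vl (es ! i) (vs ! i) (vs ! ((i + 1) mod length es))"
    using cyc unfolding is_cycle_def by blast
  define k where "k = length es"
  have oddk: "odd k" using C0(2) CC0 L(3,5) distinct_card k_def by metis
  have k1: "k \<ge> 1" using L k_def by simp
  have esne: "es \<noteq> []" using k1 k_def by (cases es) auto
  define g0 where "g0 = es ! 0"
  have "0 < length es" using k1 k_def by linarith
  then have "es ! 0 \<in> set es" by (rule nth_mem)
  then have g0C: "g0 \<in> C" unfolding g0_def using L(5) by simp
  have g0D: "g0 \<in> D" using g0C L(6) by blast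
  have esD: "es ! i \<in> D" if "i < k" for i
  proof -
    have "i < length es" using that k_def by simp
    then have "es ! i \<in> set es" by (rule nth_mem)
    then show ?thesis using L(5,6) by blast
  qed
  have Ji: "joins vl (es ! i) (vs ! i) (vs ! ((i + 1) mod k))" if "i < k" for i
    using J that k_def by blast
  have vsK: "vs ! i \<in> K" if "i < k" for i
    using endsK[of "es ! i" "vs ! i"] esD[OF that] DFc joins_end[OF Ji[OF that]] by blast
  have vsV: "vs ! i \<in> Vs vl D" if "i < k" for i
    unfolding Vs_def using esD[OF that] joins_end[OF Ji[OF that]] by blast
  have acyc: "\<not> (\<exists>C'. is_cycle vl (D - {g0}) C')"
  proof
    assume "\<exists>C'. is_cycle vl (D - {g0}) C'"
    then obtain C' where c': "is_cycle vl (D - {g0}) C'" by blast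
    then have "is_cycle vl Fc C'" using is_cycle_mono DFc by blast
    then have "C' = C" using C0(3) CC0 by blast
    then show False using is_cycle_sub[OF c'] g0C by blast
  qed
  have finVD: "finite (Vs vl D)" using Vs_finite finD gD by blast
  have cardle: "card D \<le> card (Vs vl D)"
  proof (cases "D - {g0} = {}")
    case True
    then have "D = {g0}" using g0D by blast
    moreover have "vs ! 0 \<in> Vs vl D" using vsV[of 0] k1 by simp
    then have "Vs vl D \<noteq> {}" by blast
    then have "card (Vs vl D) \<ge> 1" using finVD by (simp add: Suc_leI card_gt_0_iff)
    ultimately show ?thesis by simp
  next
    case False
    have "card (D - {g0}) < card (Vs vl (D - {g0}))"
      using forest_bound[of "D - {g0}" vl] finD gD acyc False by blast
    moreover have "card (Vs vl (D - {g0})) \<le> card (Vs vl D)"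
      using Vs_mono[of "D - {g0}" D vl] finVD by (intro card_mono) auto
    moreover have "card D = Suc (card (D - {g0}))" using card_Suc_Diff1[OF finD g0D] by simp
    ultimately show ?thesis by linarith
  qed
  have deg2: "deg vl D x \<ge> 2" if xV: "x \<in> Vs vl D" for x
  proof -
    obtain g where g: "g \<in> D" "has_end vl g x" using xV unfolding Vs_def by blast
    obtain g' where g': "g' \<in> D" "g' \<noteq> g" "has_end vl g' x" using AE g by blast
    have "(\<Sum>h\<in>{g,g'}. card {k\<in>h. vl k = x}) \<le> deg vl D x"
      unfolding deg_def using g g' finD by (intro sum_mono2) auto
    moreover have "(\<Sum>h\<in>{g,g'}. card {k\<in>h. vl k = x}) = card {k\<in>g. vl k = x} + card {k\<in>g'. vl k = x}"
      using g' by simp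
    moreover have "card {k\<in>g. vl k = x} \<ge> 1" "card {k\<in>g'. vl k = x} \<ge> 1"
      using cnt_pos gD g g' by blast+
    ultimately show ?thesis by linarith
  qed
  have deq: "deg vl D x = 2" if "x \<in> Vs vl D" for x
  proof (rule ccontr)
    assume "deg vl D x \<noteq> 2"
    then have "deg vl D x > 2" using deg2[OF that] by simp
    then have "(\<Sum>y\<in>Vs vl D. 2) < (\<Sum>y\<in>Vs vl D. deg vl D y)"
      using that deg2 finVD by (intro sum_strict_mono_ex1) auto
    then have "2 * card (Vs vl D) < 2 * card D" using deg_sum[OF finD gD] by simp
    then show False using cardle by simp
  qed
  have rel: "d g1 + d g2 = 0" if "x \<in> K" "x \<in> Vs vl D" "g1 \<in> D" "g2 \<in> D" "g1 \<noteq> g2"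
    "has_end vl g1 x" "has_end vl g2 x" for x g1 g2
  proof -
    have c1: "card {h\<in>g1. vl h = x} \<ge> 1" using cnt_pos gD that(3,6) by blast
    have c2: "card {h\<in>g2. vl h = x} \<ge> 1" using cnt_pos gD that(4,7) by blast
    have s2: "(\<Sum>g\<in>D. card {h\<in>g. vl h = x}) = 2" using deq[OF that(2)] unfolding deg_def .
    have "vp vl E d x = d g1 + d g2"
      using vpD[OF that(1)] two_sum[OF finD that(3,4,5), of "\<lambda>g. card {h\<in>g. vl h = x}", OF c1 c2 s2] by simp
    then show ?thesis using ker by simp
  qed
  show False
  proof (cases "k = 1")
    case True
    have j0: "joins vl g0 (vs ! 0) (vs ! 0)" using Ji[of 0] True unfolding g0_def by simp
    have c2: "card {h\<in>g0. vl h = vs ! 0} = 2" using cnt_joins[OF j0] by simp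
    have x0: "vs ! 0 \<in> K" "vs ! 0 \<in> Vs vl D" using vsK vsV True by auto
    have "(\<Sum>g\<in>D. card {h\<in>g. vl h = vs ! 0}) = card {h\<in>g0. vl h = vs ! 0} + (\<Sum>g\<in>D - {g0}. card {h\<in>g. vl h = vs ! 0})"
      using sum.remove[OF finD g0D] .
    then have "(\<Sum>g\<in>D - {g0}. card {h\<in>g. vl h = vs ! 0}) = 0" using deq[OF x0(2)] c2 unfolding deg_def by simp
    then have z: "\<forall>g\<in>D - {g0}. card {h\<in>g. vl h = vs ! 0} = 0" using finD by simp
    have "(\<Sum>g\<in>D. real (card {h\<in>g. vl h = vs ! 0}) * d g) =
          real (card {h\<in>g0. vl h = vs ! 0}) * d g0 + (\<Sum>g\<in>D - {g0}. real (card {h\<in>g. vl h = vs ! 0}) * d g)"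
      using sum.remove[OF finD g0D] .
    also have "(\<Sum>g\<in>D - {g0}. real (card {h\<in>g. vl h = vs ! 0}) * d g) = 0" using z by simp
    finally have "vp vl E d (vs ! 0) = 2 * d g0" using vpD[OF x0(1)] c2 by simp
    moreover have "d g0 \<noteq> 0" using g0D unfolding D_def by blast
    ultimately show False using ker by simp
  next
    case False
    then have k2: "k \<ge> 2" using k1 by simp
    have step: "d (es ! Suc i) = - d (es ! i)" if "Suc i < k" for i
    proof -
      have i: "i < k" using that by simp
      have j1: "joins vl (es ! i) (vs ! i) (vs ! Suc i)" using Ji[OF i] that by simp
      have j2: "joins vl (es ! Suc i) (vs ! Suc i) (vs ! ((Suc i + 1) mod k))" using Ji[OF that] by simp
      have ne: "es ! i \<noteq> es ! Suc i" using L(3) that k_def nth_eq_iff_index_eq[OF L(3), of i "Suc i"] by simp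
      have h1: "has_end vl (es ! i) (vs ! Suc i)" using joins_end[OF j1] by simp
      have h2: "has_end vl (es ! Suc i) (vs ! Suc i)" using joins_end[OF j2] by simp
      have "d (es ! i) + d (es ! Suc i) = 0"
        using rel[OF vsK[OF that] vsV[OF that] esD[OF i] esD[OF that] ne h1 h2] .
      then show ?thesis by simp
    qed
    have alt: "d (es ! i) = (-1) ^ i * d g0" if "i < k" for i
      using that
    proof (induction i)
      case 0 then show ?case unfolding g0_def by simp
    next
      case (Suc i)
      then show ?case using step[OF Suc.prems] by simp
    qed
    define p where "p = k - 1"
    have pk: "p < k" "Suc p = k" unfolding p_def using k1 by simp_all
    have j1: "joins vl (es ! p) (vs ! p) (vs ! 0)" using Ji[OF pk(1)] pk by simp
    have j2: "joins vl g0 (vs ! 0) (vs ! (1 mod k))" using Ji[of 0] k1 unfolding g0_def by simp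
    have ne: "es ! p \<noteq> g0" unfolding g0_def
      using nth_eq_iff_index_eq[OF L(3), of p 0] pk k2 k_def esne by simp
    have h1: "has_end vl (es ! p) (vs ! 0)" using joins_end[OF j1] by simp
    have h2: "has_end vl g0 (vs ! 0)" using joins_end[OF j2] by simp
    have k0: "0 < k" using k1 by simp
    have "d (es ! p) + d g0 = 0"
      using rel[OF vsK[OF k0] vsV[OF k0] esD[OF pk(1)] g0D ne h1 h2] .
    moreover have "even p" unfolding p_def using oddk k1 by simp
    ultimately have "d g0 + d g0 = 0" using alt[OF pk(1)] by simp
    moreover have "d g0 \<noteq> 0" using g0D unfolding D_def by blast
    ultimately show False by simp
  qed
qed

lemma joins_pair: "joins vl e a b \<Longrightarrow> joins vl e u w \<Longrightarrow> (u = a \<and> w = b) \<or> (u = b \<and> w = a)"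
  unfolding joins_def by (auto simp: doubleton_eq_iff)

lemma sum_if_delta: "finite K \<Longrightarrow> (\<Sum>x\<in>K. s x * real ((if a = x then 1 else 0) + (if b = x then 1 else (0::nat)))) =
   (if a \<in> K then s a else 0) + (if b \<in> K then s b else (0::real))"
proof -
  assume fin: "finite K"
  have "\<And>x. s x * real ((if a = x then 1 else 0) + (if b = x then 1 else (0::nat))) =
      (if a = x then s x else 0) + (if b = x then s x else 0)" by simp
  then have "(\<Sum>x\<in>K. s x * real ((if a = x then 1 else 0) + (if b = x then 1 else (0::nat)))) =
      (\<Sum>x\<in>K. (if a = x then s x else 0) + (if b = x then s x else 0))" by (rule sum.cong[OF refl])
  also have "\<dots> = (\<Sum>x\<in>K. if a = x then s x else 0) + (\<Sum>x\<in>K. if b = x then s x else 0)"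
    by (rule sum.distrib)
  also have "\<dots> = (if a \<in> K then s a else 0) + (if b \<in> K then s b else 0)"
    using fin by (simp add: sum.delta)
  finally show ?thesis .
qed

lemma static_zero:
  fixes d :: "'h set \<Rightarrow> real"
  assumes finE: "finite E" and gE: "\<forall>f\<in>E. good f"
    and lab: "\<forall>f\<in>E. \<forall>x. has_end vl f x \<longrightarrow> x < n"
    and conn: "connected_graph n vl E" and nb: "\<not> bipartite n vl E"
    and eS: "e \<in> static_edges n vl E"
    and ker: "\<forall>x<n. vp vl E d x = 0"
  shows "d e = 0"
proof -
  from eS obtain v where eE: "e \<in> E" and vn: "v < n"
    and bp: "bipartite_on vl (E - {e}) (comp vl (E - {e}) v)"
    unfolding static_edges_def by blast
  define K where "K = comp vl (E - {e}) v"
  obtain c :: "nat \<Rightarrow> bool" where c0: "\<forall>f\<in>edges_in vl (E - {e}) (comp vl (E - {e}) v). \<forall>u w. joins vl f u w \<longrightarrow> c u \<noteq> c w"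
    using bp unfolding bipartite_on_def by (elim exE) (erule that)
  then have c: "\<forall>f\<in>edges_in vl (E - {e}) K. \<forall>u w. joins vl f u w \<longrightarrow> c u \<noteq> c w"
    unfolding K_def .
  have Kn: "K \<subseteq> {..<n}"
  proof
    fix u assume "u \<in> K"
    then have "(adj vl (E - {e}))\<^sup>*\<^sup>* v u" unfolding K_def comp_def by simp
    then show "u \<in> {..<n}"
    proof (cases rule: rtranclp.cases)
      case rtrancl_refl then show ?thesis using vn by simp
    next
      case (rtrancl_into_rtrancl y)
      then obtain f where "f \<in> E - {e}" "joins vl f y u" unfolding adj_def by blast
      then show ?thesis using lab joins_end by blast
    qed
  qed
  have finK: "finite K" using Kn finite_subset by blast
  have vK: "v \<in> K" unfolding K_def comp_def by simp
  have col: "b \<in> K \<and> c a \<noteq> c b" if "f \<in> E - {e}" "joins vl f a b" "a \<in> K" for f a b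
  proof
    show "b \<in> K" using comp_closed that unfolding K_def by metis
    have "f \<in> edges_in vl (E - {e}) K" using edges_in_I[OF that(1) _ that(3)] joins_end[OF that(2)] by blast
    then show "c a \<noteq> c b" using c that(2) by blast
  qed
  obtain h h' where e: "e = {h,h'}" "h \<noteq> h'" using gE eE unfolding good_def by blast
  define a where "a = vl h"
  define a' where "a' = vl h'"
  have je: "joins vl e a a'" unfolding joins_def a_def a'_def using e by blast
  have an: "a < n" "a' < n" using lab eE joins_end[OF je] by blast+
  define s where "s x = (if c x then 1 else -1 :: real)" for x
  define \<phi> where "\<phi> f = (\<Sum>x\<in>K. s x * real (card {k\<in>f. vl k = x}))" for f
  have phi_j: "\<phi> f = (if p \<in> K then s p else 0) + (if q \<in> K then s q else 0)" if "joins vl f p q" for f p q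
    unfolding \<phi>_def cnt_joins[OF that] by (rule sum_if_delta[OF finK])
  have phi0: "\<phi> f = 0" if fE: "f \<in> E - {e}" for f
  proof -
    have "good f" using gE fE by blast
    then obtain p where "has_end vl f p" using good_has_end by blast
    then obtain q where j: "joins vl f p q" using good_joins \<open>good f\<close> by blast
    show ?thesis
    proof (cases "p \<in> K")
      case True
      then have "q \<in> K" "c p \<noteq> c q" using col[OF fE j] by auto
      then show ?thesis using phi_j[OF j] True unfolding s_def by auto
    next
      case False
      have "q \<notin> K" using col[OF fE joins_sym[OF j]] False by blast
      then show ?thesis using phi_j[OF j] False by simp
    qed
  qed
  have "0 = (\<Sum>x\<in>K. s x * vp vl E d x)" using ker Kn by (intro sum.neutral[symmetric]) auto
  also have "\<dots> = (\<Sum>x\<in>K. \<Sum>f\<in>E. s x * (real (card {k\<in>f. vl k = x}) * d f))"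
    unfolding vp_def by (simp add: sum_distrib_left)
  also have "\<dots> = (\<Sum>f\<in>E. \<Sum>x\<in>K. s x * (real (card {k\<in>f. vl k = x}) * d f))" by (rule sum.swap)
  also have "\<dots> = (\<Sum>f\<in>E. d f * \<phi> f)"
    unfolding \<phi>_def by (simp add: sum_distrib_left algebra_simps)
  also have "\<dots> = d e * \<phi> e + (\<Sum>f\<in>E - {e}. d f * \<phi> f)" using sum.remove[OF finE eE] .
  also have "(\<Sum>f\<in>E - {e}. d f * \<phi> f) = 0" using phi0 by simp
  finally have de: "d e * \<phi> e = 0" by simp
  have closure: "\<forall>u<n. u \<in> K" if both: "a \<in> K \<longleftrightarrow> a' \<in> K"
  proof (intro allI impI)
    fix u assume "u < n"
    then have "(adj vl E)\<^sup>*\<^sup>* v u" using conn vn unfolding connected_graph_def by blast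
    then show "u \<in> K"
    proof (induction rule: rtranclp_induct)
      case base then show ?case using vK .
    next
      case (step y z)
      then obtain f where f: "f \<in> E" "joins vl f y z" unfolding adj_def by blast
      show ?case
      proof (cases "f = e")
        case True
        then have "(y = a \<and> z = a') \<or> (y = a' \<and> z = a)" using joins_pair[OF je] f by blast
        then show ?thesis using step.IH both by blast
      next
        case False
        then show ?thesis using col[of f y z] f step.IH by blast
      qed
    qed
  qed
  have "\<phi> e \<noteq> 0"
  proof
    assume p0: "\<phi> e = 0"
    have pe: "\<phi> e = (if a \<in> K then s a else 0) + (if a' \<in> K then s a' else 0)" using phi_j[OF je] .
    consider (none) "a \<notin> K" "a' \<notin> K" | (one) "a \<in> K \<longleftrightarrow> a' \<notin> K" | (both) "a \<in> K" "a' \<in> K" by blast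
    then show False
    proof cases
      case none
      then show False using closure an by blast
    next
      case one
      then show False using p0 pe unfolding s_def by (auto split: if_splits)
    next
      case both
      then have "c a \<noteq> c a'" using p0 pe unfolding s_def by (auto split: if_splits)
      have allK: "\<forall>u<n. u \<in> K" using closure both by blast
      have "bipartite n vl E" unfolding bipartite_def bipartite_on_def
      proof (intro exI[of _ c] ballI allI impI)
        fix f u w assume f: "f \<in> edges_in vl E {0..<n}" and j: "joins vl f u w"
        show "c u \<noteq> c w"
        proof (cases "f = e")
          case True
          then show ?thesis using joins_pair[OF je] j \<open>c a \<noteq> c a'\<close> by metis
        next
          case False
          have "f \<in> E" using f unfolding edges_in_def by blast
          then have "u < n" using lab joins_end[OF j] by blast
          then show ?thesis using col[of f u w] False \<open>f \<in> E\<close> j allK by blast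
        qed
      qed
      then show False using nb by blast
    qed
  qed
  then show ?thesis using de by simp
qed

lemma occ_notin: "f \<notin> fst ` set r \<Longrightarrow> occ r f = 0"
  unfolding occ_def by (induction r) auto

lemma eps_exists:
  fixes w u :: "'a \<Rightarrow> real"
  assumes "finite A" "\<forall>e\<in>A. w e > 0"
  shows "\<exists>\<epsilon>>0. \<forall>e\<in>A. \<epsilon> * \<bar>u e\<bar> \<le> w e"
proof -
  define M where "M = insert 1 ((\<lambda>e. w e / (\<bar>u e\<bar> + 1)) ` A)"
  define \<epsilon> where "\<epsilon> = Min M"
  have finM: "finite M" "M \<noteq> {}" unfolding M_def using assms by auto
  have "\<forall>m\<in>M. m > 0" unfolding M_def using assms
    by (auto intro!: divide_pos_pos simp: add_nonneg_pos)
  then have ep: "\<epsilon> > 0" unfolding \<epsilon>_def using finM Min_gr_iff by blast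
  have "\<epsilon> * \<bar>u e\<bar> \<le> w e" if eA: "e \<in> A" for e
  proof -
    have "\<epsilon> \<le> w e / (\<bar>u e\<bar> + 1)" unfolding \<epsilon>_def using finM eA unfolding M_def by (intro Min_le) auto
    then have "\<epsilon> * (\<bar>u e\<bar> + 1) \<le> w e" by (simp add: pos_le_divide_eq add_nonneg_pos)
    then show ?thesis using ep by (simp add: algebra_simps)
  qed
  then show ?thesis using ep by blast
qed

lemma odd_pair_walk:
  assumes Ca: "is_cycle vl Fc Ca" and Cb: "is_cycle vl Fc Cb" and oa: "odd (card Ca)" and ob: "odd (card Cb)"
    and f: "f \<in> Ca" "f \<notin> Cb" and Fc: "Fc = edges_in vl F (comp vl F v)" and gF: "\<forall>g\<in>F. good g"
  shows "\<exists>a r. wvalid vl a r \<and> wend a r = a \<and> even (length r) \<and> fst ` set r \<subseteq> F \<and> (\<exists>f. odd (occ r f))"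
proof -
  have FcF: "Fc \<subseteq> F" unfolding Fc edges_in_def by blast
  obtain a1 r1 where r1: "wvalid vl a1 r1" "wend a1 r1 = a1" "length r1 = card Ca" "fst ` set r1 = Ca"
    "\<forall>g\<in>Ca. occ r1 g = 1" and g1: "\<exists>g\<in>Ca. has_end vl g a1"
    using cycle_walk[OF Ca] by blast
  obtain a2 r2 where r2: "wvalid vl a2 r2" "wend a2 r2 = a2" "length r2 = card Cb" "fst ` set r2 = Cb"
    and g2: "\<exists>g\<in>Cb. has_end vl g a2"
    using cycle_walk[OF Cb] by blast
  have CaF: "Ca \<subseteq> Fc" "Cb \<subseteq> Fc" using is_cycle_sub Ca Cb by blast+
  have a1c: "a1 \<in> comp vl F v" using g1 CaF edges_in_ends gF FcF unfolding Fc by blast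
  have a2c: "a2 \<in> comp vl F v" using g2 CaF edges_in_ends gF FcF unfolding Fc by blast
  have "(adj vl F)\<^sup>*\<^sup>* a1 a2" using a1c a2c rtr_sym unfolding comp_def
    by (metis mem_Collect_eq rtranclp_trans)
  then obtain p where p: "wvalid vl a1 p" "wend a1 p = a2" "fst ` set p \<subseteq> F" using rtr_walk by blast
  define W where "W = r1 @ p @ r2 @ wrev a1 p"
  have rv: "wvalid vl a2 (wrev a1 p)" "wend a2 (wrev a1 p) = a1"
    using wrev_props[OF p(1)] p(2) by auto
  have v1: "wvalid vl a1 W" "wend a1 W = a1" unfolding W_def
    using r1 p r2 rv by (simp_all add: wvalid_append wend_append)
  have v2: "even (length W)" unfolding W_def using r1(3) r2(3) oa ob by (simp add: wrev_length)
  have s1: "fst ` set r1 \<subseteq> F" using r1(4) CaF FcF by blast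
  have s2: "fst ` set r2 \<subseteq> F" using r2(4) CaF FcF by blast
  have s3: "fst ` set (wrev a1 p) \<subseteq> F" using wrev_set[of a1 p] p(3) by simp
  have v3: "fst ` set W \<subseteq> F" unfolding W_def set_append image_Un
    using s1 s2 s3 p(3) by (intro Un_least)
  have o1: "occ r1 f = 1" using r1(5) f(1) by blast
  have o2: "occ r2 f = 0" using occ_notin[of f r2] r2(4) f(2) by blast
  have "occ W f = occ r1 f + (occ p f + (occ r2 f + occ (wrev a1 p) f))" unfolding W_def
    by (simp only: occ_append)
  then have "occ W f = 1 + 2 * occ p f" using o1 o2 wrev_occ[of a1 p f] by simp
  then have v4: "odd (occ W f)" by simp
  show ?thesis using v1 v2 v3 v4 by blast
qed

lemma bad_comp_walk:
  assumes nt: "\<not> is_tree vl Fc" and no: "\<not> is_one_odd_cycle vl Fc"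
    and Fc: "Fc = edges_in vl F (comp vl F v)" and gF: "\<forall>g\<in>F. good g"
  shows "\<exists>a r. wvalid vl a r \<and> wend a r = a \<and> even (length r) \<and> fst ` set r \<subseteq> F \<and> (\<exists>f. odd (occ r f))"
proof -
  have FcF: "Fc \<subseteq> F" unfolding Fc edges_in_def by blast
  have even_case: "\<exists>a r. wvalid vl a r \<and> wend a r = a \<and> even (length r) \<and> fst ` set r \<subseteq> F \<and> (\<exists>f. odd (occ r f))"
    if C: "is_cycle vl Fc C" "even (card C)" for C
  proof -
    obtain a r where r: "wvalid vl a r" "wend a r = a" "length r = card C" "fst ` set r = C"
      "\<forall>g\<in>C. occ r g = 1" and g: "\<exists>g\<in>C. has_end vl g a"
      using cycle_walk[OF C(1)] by blast
    have "C \<subseteq> F" using is_cycle_sub[OF C(1)] FcF by blast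
    then have sF: "fst ` set r \<subseteq> F" using r(4) by simp
    obtain g0 where "g0 \<in> C" using g by blast
    then have "occ r g0 = 1" using r(5) by blast
    then have "odd (occ r g0)" by simp
    moreover have "even (length r)" using r(3) C(2) by simp
    ultimately show ?thesis using r(1,2) sF by blast
  qed
  obtain C1 where C1: "is_cycle vl Fc C1" using nt unfolding is_tree_def by blast
  show ?thesis
  proof (cases "even (card C1)")
    case True then show ?thesis using even_case C1 by blast
  next
    case o1: False
    then obtain C2 where C2: "is_cycle vl Fc C2" "C2 \<noteq> C1"
      using no C1 unfolding is_one_odd_cycle_def by blast
    show ?thesis
    proof (cases "even (card C2)")
      case True then show ?thesis using even_case C2 by blast
    next
      case o2: False
      show ?thesis
      proof (cases "C1 \<subseteq> C2")
        case False
        then obtain f where "f \<in> C1" "f \<notin> C2" by blast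
        then show ?thesis using odd_pair_walk[OF C1 C2(1) _ _ _ _ Fc gF] o1 o2 by blast
      next
        case True
        then obtain f where "f \<in> C2" "f \<notin> C1" using C2(2) by blast
        then show ?thesis using odd_pair_walk[OF C2(1) C1 _ _ _ _ Fc gF] o1 o2 by blast
      qed
    qed
  qed
qed

lemma vp_out:
  assumes "\<forall>f\<in>E. \<forall>x. has_end vl f x \<longrightarrow> x < n" "\<not> x < n"
  shows "vp vl E d x = 0"
  unfolding vp_def
proof (rule sum.neutral, rule ballI)
  fix f assume "f \<in> E"
  then have "\<not> has_end vl f x" using assms by blast
  then have "card {h\<in>f. vl h = x} = 0" by (rule cnt_zero)
  then show "real (card {h\<in>f. vl h = x}) * d f = 0" by simp
qed

lemma cone_eq:
  assumes finE: "finite E" and wP: "w \<in> P_G n vl E b"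
  defines "S \<equiv> static_edges n vl E" and "F \<equiv> {e \<in> E - static_edges n vl E. w e > 0}"
  shows "feasible_cone (P_G n vl E b) w =
           {v \<in> vp_preimage n vl E (\<lambda>_. 0). \<forall>e \<in> E - (S \<union> F). v e \<ge> 0}"
proof -
  have w0: "\<forall>e. e \<notin> E \<longrightarrow> w e = 0" and wb: "\<forall>x<n. vp vl E w x = b x"
    and wn: "\<forall>e\<in>E - S. w e \<ge> 0"
    using wP unfolding P_G_def vp_preimage_def edge_space_def S_def by auto
  show ?thesis
  proof (intro equalityI subsetI)
    fix v assume "v \<in> feasible_cone (P_G n vl E b) w"
    then obtain \<epsilon> :: real where ep: "\<epsilon> > 0" and wP': "(\<lambda>e. w e + \<epsilon> * v e) \<in> P_G n vl E b"
      unfolding feasible_cone_def by blast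
    have a: "\<forall>e. e \<notin> E \<longrightarrow> w e + \<epsilon> * v e = 0" and bb: "\<forall>x<n. vp vl E (\<lambda>e. w e + \<epsilon> * v e) x = b x"
      and c: "\<forall>e\<in>E - S. w e + \<epsilon> * v e \<ge> 0"
      using wP' unfolding P_G_def vp_preimage_def edge_space_def S_def by auto
    have "v \<in> edge_space E" unfolding edge_space_def using a w0 ep by auto
    moreover have "\<forall>x<n. vp vl E v x = 0"
    proof (intro allI impI)
      fix x assume "x < n"
      then have "vp vl E w x + \<epsilon> * vp vl E v x = b x" "vp vl E w x = b x"
        using bb wb vp_lin[OF finE, where a=w and c=\<epsilon> and d=v and vl=vl and x=x] by auto
      then show "vp vl E v x = 0" using ep by simp
    qed
    moreover have "\<forall>e \<in> E - (S \<union> F). v e \<ge> 0"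
    proof
      fix e assume e: "e \<in> E - (S \<union> F)"
      then have "w e = 0" using wn unfolding F_def S_def by force
      moreover have "w e + \<epsilon> * v e \<ge> 0" using c e by blast
      ultimately show "v e \<ge> 0" using ep by (simp add: zero_le_mult_iff)
    qed
    ultimately show "v \<in> {v \<in> vp_preimage n vl E (\<lambda>_. 0). \<forall>e \<in> E - (S \<union> F). v e \<ge> 0}"
      unfolding vp_preimage_def by blast
  next
    fix v assume "v \<in> {v \<in> vp_preimage n vl E (\<lambda>_. 0). \<forall>e \<in> E - (S \<union> F). v e \<ge> 0}"
    then have v0: "\<forall>e. e \<notin> E \<longrightarrow> v e = 0" and vb: "\<forall>x<n. vp vl E v x = 0"
      and vn: "\<forall>e \<in> E - (S \<union> F). v e \<ge> 0"
      unfolding vp_preimage_def edge_space_def by auto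
    have finF: "finite F" unfolding F_def using finE by simp
    obtain \<epsilon> :: real where ep: "\<epsilon> > 0" and el: "\<forall>e\<in>F. \<epsilon> * \<bar>v e\<bar> \<le> w e"
      using eps_exists[OF finF, of w v] unfolding F_def by auto
    have "(\<lambda>e. w e + \<epsilon> * v e) \<in> P_G n vl E b"
      unfolding P_G_def vp_preimage_def edge_space_def
    proof (intro CollectI conjI allI impI ballI)
      fix e assume "e \<notin> E" then show "w e + \<epsilon> * v e = 0" using w0 v0 by simp
    next
      fix x assume "x < n"
      then show "vp vl E (\<lambda>e. w e + \<epsilon> * v e) x = b x" using vp_lin[OF finE, where a=w and c=\<epsilon> and d=v and vl=vl and x=x] wb vb by simp
    next
      fix e assume e: "e \<in> E - static_edges n vl E"
      show "w e + \<epsilon> * v e \<ge> 0"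
      proof (cases "e \<in> F")
        case True
        have "\<epsilon> * (- v e) \<le> \<epsilon> * \<bar>v e\<bar>" using ep by (intro mult_left_mono) auto
        then have "- (\<epsilon> * v e) \<le> \<epsilon> * \<bar>v e\<bar>" by simp
        moreover have "\<epsilon> * \<bar>v e\<bar> \<le> w e" using el True by blast
        ultimately show ?thesis by linarith
      next
        case False
        then have "v e \<ge> 0" using vn e unfolding S_def by blast
        moreover have "w e \<ge> 0" using wn e unfolding S_def by blast
        ultimately show ?thesis using ep by simp
      qed
    qed
    then show "v \<in> feasible_cone (P_G n vl E b) w" unfolding feasible_cone_def using ep by blast
  qed
qed

lemma main_gen:
  fixes E :: "'h set set" and w :: "'h set \<Rightarrow> real"
  assumes finE: "finite E" and gE: "\<forall>f\<in>E. good f"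
    and lab: "\<forall>f\<in>E. \<forall>x. has_end vl f x \<longrightarrow> x < n"
    and conn: "connected_graph n vl E" and nb: "\<not> bipartite n vl E"
    and w: "w \<in> vp_preimage n vl E b"
  defines "S \<equiv> static_edges n vl E" and "F \<equiv> {e \<in> E - static_edges n vl E. w e > 0}"
  shows "(is_vertex (P_G n vl E b) w \<longleftrightarrow> (\<forall>e \<in> E - S. w e \<ge> 0) \<and> trees_and_ooc n vl F)
       \<and> (is_vertex (P_G n vl E b) w \<longrightarrow>
            feasible_cone (P_G n vl E b) w =
              {v \<in> vp_preimage n vl E (\<lambda>_. 0). \<forall>e \<in> E - (S \<union> F). v e \<ge> 0})"
proof -
  have w0: "\<forall>e. e \<notin> E \<longrightarrow> w e = 0" and wb: "\<forall>x<n. vp vl E w x = b x"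
    using w unfolding vp_preimage_def edge_space_def by auto
  have FE: "F \<subseteq> E" unfolding F_def by blast
  have FS: "F \<inter> S = {}" unfolding F_def S_def by blast
  have finF: "finite F" using FE finE finite_subset by blast
  have gF: "\<forall>g\<in>F. good g" using FE gE by blast
  have PG: "w \<in> P_G n vl E b \<longleftrightarrow> (\<forall>e \<in> E - S. w e \<ge> 0)"
    using w unfolding P_G_def S_def by blast
  have dir1: "trees_and_ooc n vl F" if vx: "is_vertex (P_G n vl E b) w"
  proof (rule ccontr)
    assume "\<not> trees_and_ooc n vl F"
    then obtain v where "v < n" and nt: "\<not> is_tree vl (edges_in vl F (comp vl F v))"
      and no: "\<not> is_one_odd_cycle vl (edges_in vl F (comp vl F v))"
      unfolding trees_and_ooc_def by blast
    obtain a r where r: "wvalid vl a r" "wend a r = a" "even (length r)" "fst ` set r \<subseteq> F"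
      and f0: "\<exists>f. odd (occ r f)"
      using bad_comp_walk[OF nt no refl gF] by blast
    obtain f0 where f0: "odd (occ r f0)" using f0 by blast
    define u where "u f = real_of_int (ivec r f)" for f
    have u0: "u f = 0" if "f \<notin> F" for f
    proof -
      have "f \<notin> fst ` set r" using r(4) that by blast
      then show ?thesis unfolding u_def using ivec_zero by simp
    qed
    have uk: "vp vl E u x = 0" for x
      unfolding u_def using vp_walk[OF finE _ r(1), of x] r(2,3,4) FE by auto
    have "odd (ivec r f0)" using f0 ivec_parity by blast
    then have uf0: "u f0 \<noteq> 0" unfolding u_def by auto
    have wP: "w \<in> P_G n vl E b" using vx unfolding is_vertex_def by blast
    then have wn: "\<forall>e \<in> E - S. w e \<ge> 0" using PG by blast
    obtain \<epsilon> :: real where ep: "\<epsilon> > 0" and el: "\<forall>e\<in>F. \<epsilon> * \<bar>u e\<bar> \<le> w e"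
      using eps_exists[OF finF, of w u] unfolding F_def by auto
    have inP: "(\<lambda>e. w e + c * u e) \<in> P_G n vl E b" if cb: "\<bar>c\<bar> = \<epsilon>" for c
      unfolding P_G_def vp_preimage_def edge_space_def
    proof (intro CollectI conjI allI impI ballI)
      fix e assume "e \<notin> E" then show "w e + c * u e = 0" using w0 u0 FE by auto
    next
      fix x assume "x < n"
      then show "vp vl E (\<lambda>e. w e + c * u e) x = b x" using vp_lin[OF finE, where a=w and c=c and d=u and vl=vl and x=x] wb uk by simp
    next
      fix e assume e: "e \<in> E - static_edges n vl E"
      show "w e + c * u e \<ge> 0"
      proof (cases "e \<in> F")
        case True
        have "- (c * u e) \<le> \<bar>c\<bar> * \<bar>u e\<bar>" by (metis abs_ge_minus_self abs_mult)
        moreover have "\<epsilon> * \<bar>u e\<bar> \<le> w e" using el True by blast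
        moreover have "\<bar>c\<bar> * \<bar>u e\<bar> = \<epsilon> * \<bar>u e\<bar>" using cb by simp
        ultimately show ?thesis by linarith
      next
        case False
        then show ?thesis using wn e u0 unfolding S_def by simp
      qed
    qed
    have eqw: "w = (\<lambda>e. (1/2) * (w e + \<epsilon> * u e) + (1 - 1/2) * (w e + (- \<epsilon>) * u e))"
      by (rule ext) (simp add: algebra_simps)
    have vx': "\<And>p q t. p \<in> P_G n vl E b \<Longrightarrow> q \<in> P_G n vl E b \<Longrightarrow> 0 < t \<Longrightarrow> t < 1 \<Longrightarrow>
        w = (\<lambda>e. t * p e + (1 - t) * q e) \<Longrightarrow> p = q"
      using vx unfolding is_vertex_def by blast
    have i1: "(\<lambda>e. w e + \<epsilon> * u e) \<in> P_G n vl E b" using inP[of \<epsilon>] ep by simp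
    have i2: "(\<lambda>e. w e + (- \<epsilon>) * u e) \<in> P_G n vl E b" using inP[of "- \<epsilon>"] ep by simp
    have "(\<lambda>e. w e + \<epsilon> * u e) = (\<lambda>e. w e + (- \<epsilon>) * u e)"
    proof (rule vx'[OF i1 i2, of "1/2"])
      show "w = (\<lambda>e. 1 / 2 * (w e + \<epsilon> * u e) + (1 - 1 / 2) * (w e + - \<epsilon> * u e))" by (rule eqw)
    qed simp_all
    then have "w f0 + \<epsilon> * u f0 = w f0 + (- \<epsilon>) * u f0" by metis
    then show False using ep uf0 by simp
  qed
  have dir2: "is_vertex (P_G n vl E b) w" if wn: "\<forall>e \<in> E - S. w e \<ge> 0" and TO: "trees_and_ooc n vl F"
  proof -
    have wP: "w \<in> P_G n vl E b" using PG wn by blast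
    show ?thesis unfolding is_vertex_def
    proof (intro conjI ballI allI impI wP)
      fix p q and t :: real
      assume p: "p \<in> P_G n vl E b" and q: "q \<in> P_G n vl E b"
        and tw: "0 < t \<and> t < 1 \<and> w = (\<lambda>e. t * p e + (1 - t) * q e)"
      have p0: "\<forall>e. e \<notin> E \<longrightarrow> p e = 0" and pb: "\<forall>x<n. vp vl E p x = b x"
        and pn: "\<forall>e \<in> E - S. p e \<ge> 0"
        using p unfolding P_G_def vp_preimage_def edge_space_def S_def by auto
      have q0: "\<forall>e. e \<notin> E \<longrightarrow> q e = 0" and qb: "\<forall>x<n. vp vl E q x = b x"
        and qn: "\<forall>e \<in> E - S. q e \<ge> 0"
        using q unfolding P_G_def vp_preimage_def edge_space_def S_def by auto
      define d where "d e = p e - q e" for e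
      have dk: "\<forall>x. vp vl E d x = 0"
      proof
        fix x show "vp vl E d x = 0"
        proof (cases "x < n")
          case True then show ?thesis unfolding d_def using vp_diff[where vl=vl and E=E and a=p and d=q and x=x] pb qb by simp
        next
          case False then show ?thesis using vp_out[OF lab] by blast
        qed
      qed
      have dS: "d e = 0" if "e \<in> S" for e
        using static_zero[OF finE gE lab conn nb _ ] that dk unfolding S_def by blast
      have dnot: "d e = 0" if "e \<notin> F" for e
      proof (cases "e \<in> E")
        case False then show ?thesis unfolding d_def using p0 q0 by simp
      next
        case eE: True
        show ?thesis
        proof (cases "e \<in> S")
          case True then show ?thesis using dS by blast
        next
          case False
          then have "\<not> w e > 0" using that eE unfolding F_def S_def by blast
          moreover have "w e = t * p e + (1 - t) * q e" using tw by simp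
          moreover have "p e \<ge> 0" "q e \<ge> 0" using pn qn eE False by auto
          moreover have "t > 0" "1 - t > 0" using tw by auto
          ultimately have "t * p e = 0" "(1 - t) * q e = 0"
            by (smt (verit) mult_nonneg_nonneg)+
          then show ?thesis unfolding d_def using \<open>t > 0\<close> \<open>1 - t > 0\<close> by simp
        qed
      qed
      have TO': "\<forall>x\<in>Vs vl F. is_tree vl (edges_in vl F (comp vl F x)) \<or>
                          is_one_odd_cycle vl (edges_in vl F (comp vl F x))"
      proof
        fix x assume "x \<in> Vs vl F"
        then have "x < n" using lab FE unfolding Vs_def by blast
        then show "is_tree vl (edges_in vl F (comp vl F x)) \<or> is_one_odd_cycle vl (edges_in vl F (comp vl F x))"
          using TO unfolding trees_and_ooc_def by blast
      qed
      have "d e = 0" for e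
        using kernel_zero[OF finE gE FE _ dk TO'] dnot by blast
      then show "p = q" unfolding d_def by (intro ext) simp
    qed
  qed
  have cone: "feasible_cone (P_G n vl E b) w =
              {v \<in> vp_preimage n vl E (\<lambda>_. 0). \<forall>e \<in> E - (S \<union> F). v e \<ge> 0}"
    if vx: "is_vertex (P_G n vl E b) w"
  proof -
    have "w \<in> P_G n vl E b" using vx unfolding is_vertex_def by blast
    then show ?thesis using cone_eq[OF finE] unfolding S_def F_def by blast
  qed
  show ?thesis using dir1 dir2 cone PG unfolding is_vertex_def by blast
qed

theorem lemmaA5:
  fixes g n :: nat and \<kappa> :: "nat list" and H :: "'h set"
    and s0 s1 :: "'h \<Rightarrow> 'h" and vl :: "'h \<Rightarrow> nat"
    and b :: "nat \<Rightarrow> real" and w :: "'h set \<Rightarrow> real"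
  assumes RG: "is_ribbon_graph g n \<kappa> H s0 s1 vl"
    and nonbip: "\<not> bipartite n vl (edges H s1)"
    and w: "w \<in> vp_preimage n vl (edges H s1) b"
  defines "E \<equiv> edges H s1"
    and "S \<equiv> static_edges n vl (edges H s1)"
    and "F \<equiv> {e \<in> edges H s1 - static_edges n vl (edges H s1). w e > 0}"
  shows "(is_vertex (P_G n vl E b) w \<longleftrightarrow>
            (\<forall>e \<in> E - S. w e \<ge> 0) \<and> trees_and_ooc n vl F)
       \<and> (is_vertex (P_G n vl E b) w \<longrightarrow>
            feasible_cone (P_G n vl E b) w =
              {v \<in> vp_preimage n vl E (\<lambda>_. 0). \<forall>e \<in> E - (S \<union> F). v e \<ge> 0})"
proof -
  have finH: "finite H" and bij: "bij_betw s1 H H" and inv: "\<forall>h\<in>H. s1 h \<noteq> h \<and> s1 (s1 h) = h"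
    and lbl: "vl ` H = {0..<n}" and conn: "connected_graph n vl (edges H s1)"
    using RG unfolding is_ribbon_graph_def by auto
  have s1H: "s1 h \<in> H" if "h \<in> H" for h using bij that bij_betw_apply by metis
  have eimg: "edges H s1 = (\<lambda>h. {h, s1 h}) ` H" unfolding edges_def by blast
  have finE: "finite (edges H s1)" unfolding eimg using finH by simp
  have gE: "\<forall>f\<in>edges H s1. good f"
  proof
    fix f assume "f \<in> edges H s1"
    then obtain h where "h \<in> H" "f = {h, s1 h}" unfolding eimg by blast
    then show "good f" unfolding good_def using inv by metis
  qed
  have lab: "\<forall>f\<in>edges H s1. \<forall>x. has_end vl f x \<longrightarrow> x < n"
  proof (intro ballI allI impI)
    fix f x assume "f \<in> edges H s1" "has_end vl f x"
    then obtain h k where h: "h \<in> H" "f = {h, s1 h}" "k \<in> f" "vl k = x"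
      unfolding eimg has_end_def by blast
    then have "k \<in> H" using s1H by blast
    then have "vl k \<in> {0..<n}" using lbl by blast
    then show "x < n" using h by simp
  qed
  show ?thesis unfolding E_def S_def F_def
    by (rule main_gen[OF finE gE lab conn nonbip w])
qed

end
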